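(* Let $X$ be a metric space with exactly $n$ points, let $G$ be a finite group acting by isometries on the Euclidean space $E^m$, and suppose that $X$ can be isometrically embedded into the metric quotient $E^m/G$. Then for every $0 \le \alpha \le 1$ the snowflake space $X^{\alpha}$ can be isometrically embedded into the metric space $Q(n,G)$.
   Context: $E^m$ denotes $m$-dimensional Euclidean space. For a finite group $G$ acting by isometries on a Euclidean (affine) space $V$, the metric quotient $V/G$ is the set of $G$-orbits with distance $d(Gx, Gy) = \min_{g \in G} |x - g y|$. For a metric space $(X,d)$ and $0 \le \alpha \le 1$, the snowflake $X^{\alpha}$ is $X$ with metric $d(x,y)^{\alpha}$ (for $\alpha = 0$ this means distance $1$ between distinct points and $0$ between equal points). For a finite group $G$, $\mathbb{R}[G]$ denotes the space of all functions $f: G \to \mathbb{R}$ with its standard Euclidean structure (the functions $\delta_g$, $g\in G$, form an orthonormal basis). Let $L_1(n,G) = \{(f_1,\dots,f_n) \in \mathbb{R}[G]^n : \sum_{i=1}^n \sum_{g \in G} f_i(g) = 1\}$, an affine hyperplane of the Euclidean space $\mathbb{R}[G]^n$. The group $G$ acts on $L_1(n,G)$ by the regular action on each coordinate, $(h\cdot(f_1,\dots,f_n)) = (f_1(h^{-1}\,\cdot),\dots,f_n(h^{-1}\,\cdot))$; $Q(n,G)$ denotes the metric quotient $L_1(n,G)/G$. *)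

theory Defs
  imports "HOL-Analysis.Analysis" "HOL-Algebra.Group_Action"
begin

text \<open>Metric of the quotient V/G, expressed on representatives:
  d(Gx, Gy) = min over g in G of |x - g y|.\<close>
definition quot_dist :: "('g, 'b) monoid_scheme \<Rightarrow> ('g \<Rightarrow> 'v::metric_space \<Rightarrow> 'v) \<Rightarrow> 'v \<Rightarrow> 'v \<Rightarrow> real"
  where "quot_dist G \<phi> x y = Min ((\<lambda>g. dist x (\<phi> g y)) ` carrier G)"

text \<open>R[G]^n represented as functions nat => 'g => real, supported on {..<n} x carrier G.
  L_1(n,G) is the affine hyperplane of total sum 1.\<close>
definition L1 :: "nat \<Rightarrow> ('g, 'b) monoid_scheme \<Rightarrow> (nat \<Rightarrow> 'g \<Rightarrow> real) set"
  where "L1 n G = {v. (\<forall>i g. (n \<le> i \<or> g \<notin> carrier G) \<longrightarrow> v i g = 0) \<and>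
                     (\<Sum>i<n. \<Sum>g\<in>carrier G. v i g) = 1}"

definition RG_dist :: "nat \<Rightarrow> ('g, 'b) monoid_scheme \<Rightarrow> (nat \<Rightarrow> 'g \<Rightarrow> real) \<Rightarrow> (nat \<Rightarrow> 'g \<Rightarrow> real) \<Rightarrow> real"
  where "RG_dist n G v w = sqrt (\<Sum>i<n. \<Sum>g\<in>carrier G. (v i g - w i g)\<^sup>2)"

definition reg_act :: "('g, 'b) monoid_scheme \<Rightarrow> 'g \<Rightarrow> (nat \<Rightarrow> 'g \<Rightarrow> real) \<Rightarrow> (nat \<Rightarrow> 'g \<Rightarrow> real)"
  where "reg_act G h v = (\<lambda>i g. if g \<in> carrier G then v i (inv\<^bsub>G\<^esub> h \<otimes>\<^bsub>G\<^esub> g) else 0)"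

text \<open>Metric of Q(n,G) = L_1(n,G)/G, on representatives.\<close>
definition Q_dist :: "nat \<Rightarrow> ('g, 'b) monoid_scheme \<Rightarrow> (nat \<Rightarrow> 'g \<Rightarrow> real) \<Rightarrow> (nat \<Rightarrow> 'g \<Rightarrow> real) \<Rightarrow> real"
  where "Q_dist n G v w = Min ((\<lambda>h. RG_dist n G v (reg_act G h w)) ` carrier G)"

end

theory Submission
  imports Defs "HOL-Real_Asymp.Real_Asymp"
begin


definition ip :: "'a set \<Rightarrow> ('a\<Rightarrow>real) \<Rightarrow> ('a\<Rightarrow>real) \<Rightarrow> real"
  where "ip T u v = (\<Sum>t\<in>T. u t * v t)"
definition mv :: "'a set \<Rightarrow> ('a\<Rightarrow>'a\<Rightarrow>real) \<Rightarrow> ('a\<Rightarrow>real) \<Rightarrow> ('a\<Rightarrow>real)"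
  where "mv T M v = (\<lambda>s. if s \<in> T then \<Sum>t\<in>T. M s t * v t else 0)"
definition supp_on :: "'a set \<Rightarrow> ('a\<Rightarrow>real) \<Rightarrow> bool"
  where "supp_on T v \<longleftrightarrow> (\<forall>s. s \<notin> T \<longrightarrow> v s = 0)"
definition symm :: "'a set \<Rightarrow> ('a\<Rightarrow>'a\<Rightarrow>real) \<Rightarrow> bool"
  where "symm T M \<longleftrightarrow> (\<forall>s\<in>T. \<forall>t\<in>T. M s t = M t s)"
definition orthonormal :: "'a set \<Rightarrow> ('a\<Rightarrow>real) set \<Rightarrow> bool"
  where "orthonormal T B \<longleftrightarrow> (\<forall>u\<in>B. supp_on T u) \<and>
     (\<forall>u\<in>B. \<forall>u'\<in>B. ip T u u' = (if u = u' then 1 else 0))"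
definition eigs :: "'a set \<Rightarrow> ('a\<Rightarrow>'a\<Rightarrow>real) \<Rightarrow> ('a\<Rightarrow>real) set \<Rightarrow> bool"
  where "eigs T M B \<longleftrightarrow> (\<forall>u\<in>B. \<exists>l. mv T M u = (\<lambda>s. l * u s))"

lemma ip_sym: "ip T u v = ip T v u"
  unfolding ip_def by (simp add: mult.commute)

lemma ip_mv_sym:
  assumes "symm T M" "finite T"
  shows "ip T (mv T M u) v = ip T u (mv T M v)"
proof -
  have "ip T (mv T M u) v = (\<Sum>s\<in>T. \<Sum>t\<in>T. M s t * u t * v s)"
    unfolding ip_def mv_def by (simp add: sum_distrib_right)
  also have "\<dots> = (\<Sum>t\<in>T. \<Sum>s\<in>T. M s t * u t * v s)" by (rule sum.swap)
  also have "\<dots> = ip T u (mv T M v)"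
    unfolding ip_def mv_def using assms(1) unfolding symm_def
    by (auto simp: sum_distrib_left intro!: sum.cong)
  finally show ?thesis .
qed

lemma ip_nonneg: "ip T v v \<ge> 0"
  unfolding ip_def by (auto intro: sum_nonneg)

lemma ip_zero_iff: "finite T \<Longrightarrow> supp_on T v \<Longrightarrow> ip T v v = 0 \<longleftrightarrow> v = (\<lambda>_. 0)"
  unfolding ip_def supp_on_def
  apply (subst sum_nonneg_eq_0_iff)
  by (auto simp: fun_eq_iff)

definition proj :: "'a set \<Rightarrow> ('a\<Rightarrow>real) set \<Rightarrow> ('a\<Rightarrow>real) \<Rightarrow> ('a\<Rightarrow>real)"
  where "proj T B v = (\<lambda>s. \<Sum>u\<in>B. ip T v u * u s)"

lemma ip_sum_left: "ip T (\<lambda>s. \<Sum>u\<in>B. f u * u s) w = (\<Sum>u\<in>B. f u * ip T u w)"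
  unfolding ip_def by (simp add: sum_distrib_right sum_distrib_left mult_ac sum.swap[of _ T])

lemma ip_diff_left: "ip T (\<lambda>s. a s - b s) w = ip T a w - ip T b w"
  unfolding ip_def by (simp add: left_diff_distrib sum_subtractf)

lemma ip_diff_right: "ip T w (\<lambda>s. a s - b s) = ip T w a - ip T w b"
  unfolding ip_def by (simp add: right_diff_distrib sum_subtractf)

lemma ip_scale_left: "ip T (\<lambda>s. c * a s) w = c * ip T a w"
  unfolding ip_def by (simp add: sum_distrib_left mult_ac)

lemma ip_scale_right: "ip T w (\<lambda>s. c * a s) = c * ip T w a"
  unfolding ip_def by (simp add: sum_distrib_left mult_ac)

lemma ip_add_left: "ip T (\<lambda>s. a s + b s) w = ip T a w + ip T b w"
  unfolding ip_def by (simp add: distrib_right sum.distrib)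

lemma ip_add_right: "ip T w (\<lambda>s. a s + b s) = ip T w a + ip T w b"
  unfolding ip_def by (simp add: distrib_left sum.distrib)

lemma onb_sum: assumes "orthonormal T B" "finite B" "u0 \<in> B"
  shows "(\<Sum>u\<in>B. f u * ip T u u0) = f u0"
proof -
  have "(\<Sum>u\<in>B. f u * ip T u u0) = (\<Sum>u\<in>B. if u = u0 then f u0 else 0)"
    using assms(1) unfolding orthonormal_def by (intro sum.cong) (auto simp: assms)
  also have "\<dots> = f u0" using assms by simp
  finally show ?thesis .
qed

lemma proj_ip: assumes "orthonormal T B" "finite B" "u0 \<in> B"
  shows "ip T (proj T B v) u0 = ip T v u0"
  unfolding proj_def ip_sum_left using onb_sum[OF assms] .

lemma proj_orth: assumes "orthonormal T B" "finite B" "u0 \<in> B"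
  shows "ip T (\<lambda>s. v s - proj T B v s) u0 = 0"
  by (simp add: ip_diff_left proj_ip[OF assms])

lemma proj_proj: assumes "orthonormal T B" "finite B"
  shows "ip T (proj T B v) (proj T B v) = (\<Sum>u\<in>B. (ip T v u)\<^sup>2)"
proof -
  have "ip T (proj T B v) (proj T B v) = (\<Sum>u\<in>B. ip T v u * ip T u (proj T B v))"
    unfolding proj_def[of T B v] by (rule ip_sum_left)
  also have "\<dots> = (\<Sum>u\<in>B. (ip T v u)\<^sup>2)"
    using proj_ip[OF assms] by (intro sum.cong) (auto simp: ip_sym[of T _ "proj T B v"] power2_eq_square)
  finally show ?thesis .
qed

lemma bessel_eq: assumes "orthonormal T B" "finite B"
  shows "ip T (\<lambda>s. v s - proj T B v s) (\<lambda>s. v s - proj T B v s)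
     = ip T v v - (\<Sum>u\<in>B. (ip T v u)\<^sup>2)"
proof -
  have a: "ip T v (proj T B v) = (\<Sum>u\<in>B. (ip T v u)\<^sup>2)"
    unfolding proj_def ip_sym[of T v] ip_sum_left by (simp add: ip_sym[of T _ v] power2_eq_square)
  show ?thesis
    by (simp add: ip_diff_left ip_diff_right a proj_proj[OF assms] ip_sym[of T "proj T B v" v])
qed

definition ev :: "'a \<Rightarrow> ('a\<Rightarrow>real)" where "ev t = (\<lambda>s. if s = t then 1 else 0)"

lemma ev_self: "ev t t = 1" by (simp add: ev_def)

lemma ip_ev_left: "finite T \<Longrightarrow> t \<in> T \<Longrightarrow> ip T (ev t) u = u t"
proof -
  assume "finite T" "t \<in> T"
  have "\<And>ta. (if ta = t then 1 else 0) * u ta = (if ta = t then u t else 0)" by simp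
  then show ?thesis unfolding ip_def ev_def using \<open>finite T\<close> \<open>t \<in> T\<close> by simp
qed

lemma ip_ev_ev: "finite T \<Longrightarrow> t \<in> T \<Longrightarrow> ip T (ev t) (ev t) = 1"
  by (simp add: ip_ev_left) (simp add: ev_def)

lemma bessel_le: assumes "orthonormal T B" "finite B" "finite T" "t \<in> T"
  shows "(\<Sum>u\<in>B. (u t)\<^sup>2) \<le> 1"
  using bessel_eq[OF assms(1,2), of "ev t"] ip_nonneg[of T "\<lambda>s. ev t s - proj T B (ev t) s"]
  by (simp add: ip_ev_left[OF assms(3,4)] ip_ev_ev[OF assms(3,4)] ev_self)

lemma sum_sq_card: assumes "orthonormal T B" "finite B" "finite T"
  shows "(\<Sum>t\<in>T. \<Sum>u\<in>B. (u t)\<^sup>2) = real (card B)"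
proof -
  have "(\<Sum>t\<in>T. \<Sum>u\<in>B. (u t)\<^sup>2) = (\<Sum>u\<in>B. ip T u u)"
    unfolding ip_def by (subst sum.swap) (simp add: power2_eq_square)
  also have "\<dots> = (\<Sum>u\<in>B. 1)" using assms(1) unfolding orthonormal_def by simp
  finally show ?thesis by simp
qed

lemma card_le_T: assumes "orthonormal T B" "finite B" "finite T"
  shows "card B \<le> card T"
proof -
  have "real (card B) = (\<Sum>t\<in>T. \<Sum>u\<in>B. (u t)\<^sup>2)" using sum_sq_card[OF assms] by simp
  also have "\<dots> \<le> (\<Sum>t\<in>T. 1)" by (intro sum_mono bessel_le[OF assms(1,2,3)])
  finally show ?thesis by simp
qed

lemma proj_supp: "orthonormal T B \<Longrightarrow> supp_on T (proj T B v)"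
  unfolding orthonormal_def supp_on_def proj_def by (auto intro: sum.neutral)

lemma complete: assumes "orthonormal T B" "finite B" "finite T" "card B = card T" "t \<in> T"
  shows "(\<Sum>u\<in>B. u t * u s) = (if s = t then 1 else 0)"
proof (cases "t \<in> T")
  case False
  then show ?thesis using assms(5) by auto
next
  case tT: True
  have eq1: "\<forall>t\<in>T. (\<Sum>u\<in>B. (u t)\<^sup>2) = 1"
  proof (rule ccontr)
    assume "\<not> ?thesis"
    then obtain t0 where t0: "t0 \<in> T" "(\<Sum>u\<in>B. (u t0)\<^sup>2) \<noteq> 1" by auto
    have "(\<Sum>t\<in>T. \<Sum>u\<in>B. (u t)\<^sup>2) < (\<Sum>t\<in>T. 1)"
      apply (rule sum_strict_mono_ex1[OF assms(3)])
      using bessel_le[OF assms(1,2,3)] t0 by (auto simp: order.strict_iff_order)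
    then show False using sum_sq_card[OF assms(1,2,3)] assms(4) by simp
  qed
  let ?w = "\<lambda>s. ev t s - proj T B (ev t) s"
  have "ip T ?w ?w = 0"
    using bessel_eq[OF assms(1,2), of "ev t"] eq1 tT
    by (simp add: ip_ev_left[OF assms(3) tT] ip_ev_ev[OF assms(3) tT] ev_self)
  moreover have "supp_on T ?w"
    using proj_supp[OF assms(1), of "ev t"] tT unfolding supp_on_def ev_def by auto
  ultimately have "?w = (\<lambda>_. 0)" using ip_zero_iff assms(3) by blast
  then have "ev t s = proj T B (ev t) s" by (metis diff_eq_eq add_0 )
  then show ?thesis unfolding proj_def ev_def using ip_ev_left[OF assms(3) tT]
    by (simp add: ev_def)
qed

lemma exists_orth: assumes "orthonormal T B" "finite B" "finite T" "card B < card T"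
  shows "\<exists>w. supp_on T w \<and> ip T w w = 1 \<and> (\<forall>u\<in>B. ip T w u = 0)"
proof -
  have "\<exists>t\<in>T. (\<Sum>u\<in>B. (u t)\<^sup>2) < 1"
  proof (rule ccontr)
    assume "\<not> ?thesis"
    then have "\<forall>t\<in>T. (\<Sum>u\<in>B. (u t)\<^sup>2) = 1" using bessel_le[OF assms(1,2,3)] by force
    then have "(\<Sum>t\<in>T. \<Sum>u\<in>B. (u t)\<^sup>2) = real (card T)" by simp
    then show False using sum_sq_card[OF assms(1,2,3)] assms(4) by simp
  qed
  then obtain t where tT: "t \<in> T" and lt: "(\<Sum>u\<in>B. (u t)\<^sup>2) < 1" by auto
  let ?w = "\<lambda>s. ev t s - proj T B (ev t) s"
  define c where "c = ip T ?w ?w"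
  have c: "c > 0"
    using bessel_eq[OF assms(1,2), of "ev t"] lt unfolding c_def
    by (simp add: ip_ev_left[OF assms(3) tT] ip_ev_ev[OF assms(3) tT] ev_self)
  let ?v = "\<lambda>s. (1 / sqrt c) * ?w s"
  have "ip T ?v ?v = 1" using c unfolding ip_scale_left ip_scale_right c_def[symmetric]
    by (simp add: power2_eq_square[symmetric])
  moreover have "supp_on T ?v"
    using proj_supp[OF assms(1), of "ev t"] tT unfolding supp_on_def ev_def by auto
  moreover have "\<forall>u\<in>B. ip T ?v u = 0"
    using proj_orth[OF assms(1,2)] ip_scale_left[of T "1 / sqrt c" "\<lambda>s. ev t s - proj T B (ev t) s"] by simp
  ultimately show ?thesis by blast
qed

lemma compact_box: "compact (Pi UNIV (\<lambda>s. if s \<in> T then {-1..1::real} else {0}))"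
proof -
  have "compactin (product_topology (\<lambda>i. euclidean) UNIV)
          (PiE UNIV (\<lambda>s. if s \<in> T then {-1..1::real} else {0}))"
    by (subst compactin_PiE) auto
  then show ?thesis by (simp add: euclidean_product_topology PiE_UNIV_domain)
qed

lemma cont_ip: "continuous_on UNIV (\<lambda>v::'a\<Rightarrow>real. ip T (f v) (g v))"
  if "continuous_on UNIV f" "continuous_on UNIV g" for f g :: "('a\<Rightarrow>real) \<Rightarrow> ('a\<Rightarrow>real)"
  unfolding ip_def
  by (intro continuous_on_sum continuous_on_mult continuous_on_product_then_coordinatewise[OF that(1)]
      continuous_on_product_then_coordinatewise[OF that(2)])

lemma cont_mv: "continuous_on UNIV (\<lambda>v::'a\<Rightarrow>real. mv T M v)"
  unfolding mv_def
  apply (rule continuous_on_coordinatewise_then_product)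
  subgoal for i by (cases "i \<in> T") (auto intro!: continuous_intros continuous_on_product_coordinates)
  done

lemma mv_lin: "mv T M (\<lambda>s. a s + c * b s) = (\<lambda>s. mv T M a s + c * mv T M b s)"
  unfolding mv_def by (auto simp: distrib_left sum.distrib sum_distrib_left mult_ac)

lemma mv_supp: "supp_on T (mv T M v)"
  unfolding mv_def supp_on_def by auto

lemma eig_exists:
  assumes T: "finite T" and M: "symm T M" and B: "orthonormal T B" "finite B" "eigs T M B"
    and lt: "card B < card T"
  shows "\<exists>u. u \<notin> B \<and> orthonormal T (insert u B) \<and> eigs T M (insert u B)"
proof -
  define K where "K = {v. supp_on T v \<and> (\<forall>u\<in>B. ip T v u = 0) \<and> ip T v v = 1}"
  define f where "f v = ip T (mv T M v) v" for v
  have Kne: "K \<noteq> {}" using exists_orth[OF B(1,2) T lt] unfolding K_def by auto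
  have KS: "K \<subseteq> Pi UNIV (\<lambda>s. if s \<in> T then {-1..1::real} else {0})"
  proof
    fix v assume v: "v \<in> K"
    have "\<bar>v s\<bar> \<le> 1" if "s \<in> T" for s
    proof -
      have "(v s)\<^sup>2 \<le> (\<Sum>t\<in>T. (v t)\<^sup>2)"
        using T that by (intro member_le_sum) auto
      also have "\<dots> = 1" using v unfolding K_def ip_def by (simp add: power2_eq_square)
      finally show ?thesis by (simp add: abs_square_le_1)
    qed
    then show "v \<in> Pi UNIV (\<lambda>s. if s \<in> T then {-1..1::real} else {0})"
      using v unfolding K_def supp_on_def by (auto simp: abs_le_iff)
  qed
  have Kc: "closed K"
  proof -
    have c1: "closed {v::'a\<Rightarrow>real. v s = 0}" for s
      by (rule closed_Collect_eq) auto
    have c2: "closed {v::'a\<Rightarrow>real. ip T v u = 0}" for u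
      by (rule closed_Collect_eq) (auto intro: cont_ip)
    have c3: "closed {v::'a\<Rightarrow>real. ip T v v = 1}"
      by (rule closed_Collect_eq) (auto intro: cont_ip)
    have "K = (\<Inter>s\<in>-T. {v. v s = 0}) \<inter> (\<Inter>u\<in>B. {v. ip T v u = 0}) \<inter> {v. ip T v v = 1}"
      unfolding K_def supp_on_def by auto
    then show ?thesis using c1 c2 c3 by (auto intro!: closed_Int closed_INT)
  qed
  have Kcomp: "compact K"
    using compact_Int_closed[OF compact_box[of T] Kc] KS by (simp add: Int_absorb1 Int_absorb2)
  have fc: "continuous_on K f" unfolding f_def
    by (rule continuous_on_subset[OF cont_ip[OF cont_mv]]) auto
  obtain v0 where v0: "v0 \<in> K" and vmax: "\<forall>y\<in>K. f y \<le> f v0"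
    using continuous_attains_sup[OF Kcomp Kne fc] by blast
  define l where "l = f v0"
  have Winv: "ip T (mv T M w) u = 0" if "u \<in> B" "\<forall>u\<in>B. ip T w u = 0" for w u
  proof -
    obtain c where c: "mv T M u = (\<lambda>s. c * u s)" using B(3) \<open>u \<in> B\<close> unfolding eigs_def by blast
    have "ip T (mv T M w) u = ip T w (mv T M u)" by (rule ip_mv_sym[OF M T])
    also have "\<dots> = c * ip T w u" by (simp add: c ip_scale_right)
    finally show ?thesis using that by simp
  qed
  have fhom: "f (\<lambda>s. c * w s) = c\<^sup>2 * f w" for c w
  proof -
    have "mv T M (\<lambda>s. c * w s) = (\<lambda>s. c * mv T M w s)"
      unfolding mv_def by (auto simp: sum_distrib_left mult_ac)
    then show ?thesis unfolding f_def by (simp add: ip_scale_left ip_scale_right power2_eq_square)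
  qed
  have W: "f w \<le> l * ip T w w" if "supp_on T w" "\<forall>u\<in>B. ip T w u = 0" for w
  proof (cases "ip T w w = 0")
    case True
    then have "w = (\<lambda>_. 0)" using ip_zero_iff[OF T that(1)] by simp
    then show ?thesis unfolding f_def by (simp add: ip_def)
  next
    case False
    define c where "c = ip T w w"
    have cpos: "c > 0" using False ip_nonneg[of T w] unfolding c_def by simp
    let ?y = "\<lambda>s. (1 / sqrt c) * w s"
    have y1: "ip T ?y u = (1/sqrt c) * ip T w u" for u by (rule ip_scale_left)
    have y2: "ip T ?y ?y = (1/sqrt c) * ((1/sqrt c) * ip T w w)" by (simp only: ip_scale_left ip_scale_right)
    have "ip T ?y ?y = 1" unfolding y2 c_def[symmetric] using cpos
      by (simp add: power2_eq_square[symmetric])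
    moreover have "\<forall>u\<in>B. ip T ?y u = 0" using that(2) y1 by simp
    moreover have "supp_on T ?y" using that(1) by (auto simp: supp_on_def)
    ultimately have "?y \<in> K" unfolding K_def by blast
    then have "f ?y \<le> l" using vmax unfolding l_def by blast
    moreover have "f ?y = f w / c" using fhom[of "1/sqrt c" w] cpos by (simp add: power_divide)
    ultimately have "f w / c \<le> l" by simp
    then show ?thesis using cpos unfolding c_def[symmetric] by (simp add: divide_le_eq mult.commute)
  qed
  define r where "r = (\<lambda>s. mv T M v0 s - l * v0 s)"
  have v0s: "supp_on T v0" "\<forall>u\<in>B. ip T v0 u = 0" "ip T v0 v0 = 1" using v0 unfolding K_def by auto
  have rs: "supp_on T r" using v0s(1) mv_supp[of T M v0] unfolding r_def supp_on_def by auto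
  have rB: "\<forall>u\<in>B. ip T r u = 0" unfolding r_def using Winv v0s(2)
    by (simp add: ip_diff_left ip_scale_left)
  have lv: "ip T (mv T M v0) v0 = l" unfolding l_def f_def ..
  have rv: "ip T r v0 = 0" unfolding r_def by (simp add: ip_diff_left ip_scale_left lv v0s(3))
  define R where "R = ip T r r"
  have Mv0r: "ip T (mv T M v0) r = R"
  proof -
    have "mv T M v0 = (\<lambda>s. r s + l * v0 s)" unfolding r_def by simp
    then show ?thesis unfolding R_def by (simp add: ip_add_left ip_scale_left ip_sym[of T v0 r] rv)
  qed
  have key: "2 * e * R \<le> e\<^sup>2 * (l * R - f r)" for e
  proof -
    let ?w = "\<lambda>s. v0 s + e * r s"
    have ws: "supp_on T ?w" using v0s(1) rs unfolding supp_on_def by auto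
    have wB: "\<forall>u\<in>B. ip T ?w u = 0" using v0s(2) rB by (simp add: ip_add_left ip_scale_left)
    have Mrv: "ip T (mv T M r) v0 = R"
      using ip_mv_sym[OF M T, of r v0] ip_sym[of T r "mv T M v0"] Mv0r by simp
    have "f ?w = ip T (mv T M v0) v0 + e * ip T (mv T M v0) r + e * (ip T (mv T M r) v0 + e * f r)"
      unfolding f_def mv_lin by (simp only: ip_add_left ip_add_right ip_scale_left ip_scale_right distrib_left)
    then have fw: "f ?w = l + 2 * e * R + e\<^sup>2 * f r"
      by (simp add: lv Mv0r Mrv power2_eq_square algebra_simps)
    have "ip T ?w ?w = ip T v0 v0 + e * ip T v0 r + e * (ip T r v0 + e * ip T r r)"
      by (simp only: ip_add_left ip_add_right ip_scale_left ip_scale_right distrib_left)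
    then have ww: "ip T ?w ?w = 1 + e\<^sup>2 * R"
      by (simp add: v0s(3) rv ip_sym[of T v0 r] R_def power2_eq_square)
    from W[OF ws wB] show ?thesis unfolding fw ww by (simp add: algebra_simps)
  qed
  have R0: "R = 0"
  proof (rule ccontr)
    assume "R \<noteq> 0"
    then have Rp: "R > 0" using ip_nonneg[of T r] unfolding R_def by simp
    define C where "C = \<bar>l * R - f r\<bar> + 1"
    have Cp: "C > 0" unfolding C_def by simp
    define e where "e = R / C"
    have ep: "e > 0" using Rp Cp unfolding e_def by simp
    have "2 * e * R \<le> e\<^sup>2 * (l * R - f r)" by (rule key)
    also have "\<dots> \<le> e\<^sup>2 * C" unfolding C_def by (intro mult_left_mono) auto
    also have "\<dots> = e * R" unfolding e_def using Cp by (simp add: power2_eq_square)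
    finally show False using ep Rp by (simp add: mult_pos_pos)
  qed
  then have "r = (\<lambda>_. 0)" using ip_zero_iff[OF T rs] unfolding R_def by simp
  then have eig: "mv T M v0 = (\<lambda>s. l * v0 s)" unfolding r_def by (metis eq_iff_diff_eq_0)
  have nB: "v0 \<notin> B" using v0s(2,3) by auto
  have v0B': "\<forall>u\<in>B. ip T u v0 = 0" using v0s(2) ip_sym[of T v0] by simp
  have "orthonormal T (insert v0 B)"
    using B(1) v0s(1,3) v0s(2) v0B' nB unfolding orthonormal_def
    by (intro conjI ballI) (auto split: if_splits)
  moreover have "eigs T M (insert v0 B)" using B(3) eig unfolding eigs_def by auto
  ultimately show ?thesis using nB by blast
qed

lemma sum_swap_mult: fixes a b :: "_ \<Rightarrow> real"
  shows "(\<Sum>x\<in>A. a x * (\<Sum>y\<in>B. b y * c x y)) = (\<Sum>y\<in>B. b y * (\<Sum>x\<in>A. a x * c x y))"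
proof -
  have "(\<Sum>x\<in>A. a x * (\<Sum>y\<in>B. b y * c x y)) = (\<Sum>x\<in>A. \<Sum>y\<in>B. b y * (a x * c x y))"
    by (simp add: sum_distrib_left mult_ac)
  also have "\<dots> = (\<Sum>y\<in>B. \<Sum>x\<in>A. b y * (a x * c x y))" by (rule sum.swap)
  also have "\<dots> = (\<Sum>y\<in>B. b y * (\<Sum>x\<in>A. a x * c x y))" by (simp add: sum_distrib_left)
  finally show ?thesis .
qed

lemma dsum: fixes a b :: "_ \<Rightarrow> real"
  shows "(\<Sum>k\<in>T. (\<Sum>u\<in>B. a u * u k) * (\<Sum>u'\<in>C. b u' * u' k))
   = (\<Sum>u\<in>B. a u * (\<Sum>u'\<in>C. b u' * (\<Sum>k\<in>T. u k * u' k)))"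
proof -
  have "(\<Sum>k\<in>T. (\<Sum>u\<in>B. a u * u k) * (\<Sum>u'\<in>C. b u' * u' k))
      = (\<Sum>k\<in>T. 1 * (\<Sum>u\<in>B. a u * (u k * (\<Sum>u'\<in>C. b u' * u' k))))"
    by (simp add: sum_distrib_right mult_ac)
  also have "\<dots> = (\<Sum>u\<in>B. a u * (\<Sum>k\<in>T. 1 * (u k * (\<Sum>u'\<in>C. b u' * u' k))))"
    by (rule sum_swap_mult)
  also have "\<dots> = (\<Sum>u\<in>B. a u * (\<Sum>k\<in>T. u k * (\<Sum>u'\<in>C. b u' * 1 * u' k)))" by simp
  also have "\<dots> = (\<Sum>u\<in>B. a u * (\<Sum>u'\<in>C. b u' * (\<Sum>k\<in>T. u k * (1 * u' k))))"
    by (subst sum_swap_mult) (simp add: mult_ac)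
  finally show ?thesis by simp
qed

lemma spectral:
  assumes T: "finite T" and M: "symm T M"
  shows "\<exists>B. finite B \<and> orthonormal T B \<and> eigs T M B \<and> card B = card T"
proof -
  have "\<forall>k\<le>card T. \<exists>B. finite B \<and> orthonormal T B \<and> eigs T M B \<and> card B = k"
  proof (intro allI impI)
    fix k assume "k \<le> card T"
    then show "\<exists>B. finite B \<and> orthonormal T B \<and> eigs T M B \<and> card B = k"
    proof (induction k)
      case 0
      show ?case by (rule exI[of _ "{}"]) (simp add: orthonormal_def eigs_def)
    next
      case (Suc k)
      then obtain B where B: "finite B" "orthonormal T B" "eigs T M B" "card B = k" by auto
      then obtain u where "u \<notin> B" "orthonormal T (insert u B)" "eigs T M (insert u B)"
        using eig_exists[OF T M B(2,1,3)] Suc.prems by auto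
      then show ?case using B by (intro exI[of _ "insert u B"]) auto
    qed
  qed
  then show ?thesis by auto
qed

lemma expand: assumes "orthonormal T B" "finite B" "finite T" "card B = card T" "supp_on T v"
  shows "v s = (\<Sum>u\<in>B. ip T v u * u s)"
proof (cases "s \<in> T")
  case False
  then show ?thesis using assms(1,5) unfolding orthonormal_def supp_on_def by (auto intro: sum.neutral)
next
  case True
  have "(\<Sum>u\<in>B. ip T v u * u s) = (\<Sum>u\<in>B. u s * (\<Sum>t\<in>T. v t * u t))"
    unfolding ip_def by (simp add: mult_ac)
  also have "\<dots> = (\<Sum>t\<in>T. v t * (\<Sum>u\<in>B. u s * u t))" by (rule sum_swap_mult)
  finally have "(\<Sum>u\<in>B. ip T v u * u s) = (\<Sum>t\<in>T. v t * (\<Sum>u\<in>B. u t * u s))"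
    by (simp add: mult_ac)
  also have "\<dots> = (\<Sum>t\<in>T. v t * (if s = t then 1 else 0))"
    using complete[OF assms(1-4)] by simp
  also have "\<dots> = v s" using True assms(3) by (simp add: if_distrib cong: if_cong)
  finally show ?thesis by simp
qed

lemma eig_val: assumes "orthonormal T B" "eigs T M B" "u \<in> B"
  shows "mv T M u = (\<lambda>s. ip T (mv T M u) u * u s)"
proof -
  obtain l where l: "mv T M u = (\<lambda>s. l * u s)" using assms(2,3) unfolding eigs_def by blast
  have "ip T (mv T M u) u = l" unfolding l ip_scale_left using assms(1,3) unfolding orthonormal_def by simp
  then show ?thesis using l by simp
qed

definition psd :: "'a set \<Rightarrow> ('a\<Rightarrow>'a\<Rightarrow>real) \<Rightarrow> bool"
  where "psd T M \<longleftrightarrow> (\<forall>v. ip T (mv T M v) v \<ge> 0)"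

lemma psd_sqrt:
  assumes T: "finite T" and M: "symm T M" and P: "psd T M"
  shows "\<exists>R. (\<forall>s\<in>T. \<forall>t\<in>T. (\<Sum>k\<in>T. R k s * R k t) = M s t) \<and> symm T R \<and>
     (\<forall>\<pi>. bij_betw \<pi> T T \<and> (\<forall>s\<in>T. \<forall>t\<in>T. M (\<pi> s) (\<pi> t) = M s t) \<longrightarrow>
          (\<forall>s\<in>T. \<forall>t\<in>T. R (\<pi> s) (\<pi> t) = R s t)) \<and>
     ((\<forall>s\<in>T. (\<Sum>t\<in>T. M s t) = 0) \<longrightarrow> (\<forall>s\<in>T. (\<Sum>t\<in>T. R s t) = 0))"
proof -
  obtain B where B: "finite B" "orthonormal T B" "eigs T M B" "card B = card T"
    using spectral[OF T M] by blast
  define lam where "lam u = ip T (mv T M u) u" for u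
  have lam0: "lam u \<ge> 0" for u using P unfolding psd_def lam_def by simp
  have eu: "mv T M u = (\<lambda>s. lam u * u s)" if "u \<in> B" for u
    unfolding lam_def by (rule eig_val[OF B(2,3) that])
  have ON: "ip T u u' = (if u = u' then 1 else 0)" if "u \<in> B" "u' \<in> B" for u u'
    using B(2) that unfolding orthonormal_def by auto
  have comp: "(\<Sum>u\<in>B. u t * u s) = (if s = t then 1 else 0)" if "t \<in> T" for s t
    by (rule complete[OF B(2,1) T B(4) that])
  have usupp: "u s = 0" if "u \<in> B" "s \<notin> T" for u s
    using B(2) that unfolding orthonormal_def supp_on_def by auto
  define R where "R s t = (\<Sum>u\<in>B. sqrt (lam u) * u s * u t)" for s t
  have Mst: "M s t = (\<Sum>u\<in>B. lam u * u s * u t)" if "s \<in> T" "t \<in> T" for s t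
  proof -
    have "M s t = (\<Sum>k\<in>T. M s k * (if k = t then 1 else 0))"
      using that T by (simp add: if_distrib cong: if_cong)
    also have "\<dots> = (\<Sum>k\<in>T. M s k * (\<Sum>u\<in>B. u t * u k))"
      using comp[OF that(2)] by (simp add: eq_commute)
    also have "\<dots> = (\<Sum>u\<in>B. u t * (\<Sum>k\<in>T. M s k * u k))"
      by (subst sum_swap_mult) (simp add: mult_ac)
    also have "\<dots> = (\<Sum>u\<in>B. u t * mv T M u s)" using that by (simp add: mv_def)
    also have "\<dots> = (\<Sum>u\<in>B. lam u * u s * u t)" by (intro sum.cong) (auto simp: eu)
    finally show ?thesis .
  qed
  have A: "(\<Sum>k\<in>T. R k s * R k t) = M s t" if "s \<in> T" "t \<in> T" for s t
  proof -
    have "(\<Sum>k\<in>T. R k s * R k t) = (\<Sum>k\<in>T. (\<Sum>u\<in>B. (sqrt (lam u) * u s) * u k) *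
       (\<Sum>u'\<in>B. (sqrt (lam u') * u' t) * u' k))"
      unfolding R_def by (simp add: mult_ac)
    also have "\<dots> = (\<Sum>u\<in>B. (sqrt (lam u) * u s) * (\<Sum>u'\<in>B. (sqrt (lam u') * u' t) * ip T u u'))"
      unfolding dsum ip_def ..
    also have "\<dots> = (\<Sum>u\<in>B. sqrt (lam u) * sqrt (lam u) * u s * u t)"
      by (intro sum.cong refl) (simp add: ON if_distrib B(1) cong: if_cong)
    also have "\<dots> = M s t" using Mst[OF that] lam0 by (simp add: real_sqrt_mult_self)
    finally show ?thesis .
  qed
  have Rs: "symm T R" unfolding symm_def R_def by (auto simp: mult_ac)
  have Rv: "(\<Sum>k\<in>T. R t k * v k) = sqrt l * v t"
    if v: "supp_on T v" "mv T M v = (\<lambda>s. l * v s)" and tT: "t \<in> T" for v l t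
  proof -
    have c: "sqrt (lam u) * ip T v u = sqrt l * ip T v u" if "u \<in> B" for u
    proof -
      have "lam u * ip T v u = ip T (mv T M u) v" by (simp add: eu[OF that] ip_scale_left ip_sym)
      also have "\<dots> = ip T u (mv T M v)" by (rule ip_mv_sym[OF M T])
      also have "\<dots> = l * ip T v u" by (simp add: v(2) ip_scale_right ip_sym)
      finally have "(lam u - l) * ip T v u = 0" by (simp add: algebra_simps)
      then show ?thesis by auto
    qed
    have "(\<Sum>k\<in>T. R t k * v k) = (\<Sum>k\<in>T. v k * (\<Sum>u\<in>B. (sqrt (lam u) * u t) * u k))"
      unfolding R_def by (simp add: mult_ac)
    also have "\<dots> = (\<Sum>u\<in>B. sqrt (lam u) * ip T v u * u t)"
      unfolding ip_def by (subst sum_swap_mult) (simp add: mult_ac)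
    also have "\<dots> = (\<Sum>u\<in>B. sqrt l * (ip T v u * u t))" by (intro sum.cong refl) (simp add: c)
    also have "\<dots> = sqrt l * v t"
      using expand[OF B(2,1) T B(4) v(1), of t] by (simp add: sum_distrib_left[symmetric])
    finally show ?thesis .
  qed
  have Pi: "R (\<pi> s) (\<pi> t) = R s t"
    if pi: "bij_betw \<pi> T T" "\<forall>s\<in>T. \<forall>t\<in>T. M (\<pi> s) (\<pi> t) = M s t" and st: "s \<in> T" "t \<in> T"
    for \<pi> s t
  proof -
    have piT: "\<pi> x \<in> T" if "x \<in> T" for x using pi(1) that by (auto simp: bij_betw_def)
    have piinj: "\<pi> x = \<pi> y \<longleftrightarrow> x = y" if "x \<in> T" "y \<in> T" for x y
      using pi(1) that by (auto simp: bij_betw_def inj_on_def)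
    define upi where "upi u = (\<lambda>x. if x \<in> T then u (\<pi> x) else (0::real))" for u
    have upe: "(\<Sum>k\<in>T. R t k * u (\<pi> k)) = sqrt (lam u) * u (\<pi> t)" if u: "u \<in> B" for u
    proof -
      have "supp_on T (upi u)" unfolding upi_def supp_on_def by auto
      moreover have "mv T M (upi u) = (\<lambda>x. lam u * upi u x)"
      proof
        fix x
        show "mv T M (upi u) x = lam u * upi u x"
        proof (cases "x \<in> T")
          case True
          have "(\<Sum>k\<in>T. M x k * upi u k) = (\<Sum>k\<in>T. M (\<pi> x) (\<pi> k) * u (\<pi> k))"
            unfolding upi_def using pi(2) True by (intro sum.cong) auto
          also have "\<dots> = (\<Sum>k\<in>T. M (\<pi> x) k * u k)"
            using sum.reindex_bij_betw[OF pi(1), of "\<lambda>k. M (\<pi> x) k * u k"] by simp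
          also have "\<dots> = mv T M u (\<pi> x)" using piT[OF True] by (simp add: mv_def)
          also have "\<dots> = lam u * upi u x" using True by (simp add: eu[OF u] upi_def)
          finally show ?thesis using True by (simp add: mv_def)
        qed (simp add: mv_def upi_def)
      qed
      ultimately have "(\<Sum>k\<in>T. R t k * upi u k) = sqrt (lam u) * upi u t" using Rv st(2) by blast
      then show ?thesis using st(2) unfolding upi_def by (simp cong: sum.cong)
    qed
    have "R (\<pi> s) (\<pi> t) = (\<Sum>u\<in>B. u (\<pi> s) * (sqrt (lam u) * u (\<pi> t)))"
      unfolding R_def by (simp add: mult_ac)
    also have "\<dots> = (\<Sum>u\<in>B. u (\<pi> s) * (\<Sum>k\<in>T. R t k * u (\<pi> k)))"
      by (intro sum.cong refl) (simp add: upe)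
    also have "\<dots> = (\<Sum>k\<in>T. R t k * (\<Sum>u\<in>B. u (\<pi> s) * u (\<pi> k)))"
      by (rule sum_swap_mult)
    also have "\<dots> = (\<Sum>k\<in>T. R t k * (if k = s then 1 else 0))"
    proof (intro sum.cong refl)
      fix k assume k: "k \<in> T"
      have "(\<Sum>u\<in>B. u (\<pi> s) * u (\<pi> k)) = (if \<pi> k = \<pi> s then 1 else 0)"
        by (rule comp[OF piT[OF st(1)]])
      also have "\<dots> = (if k = s then 1 else 0)" using piinj[OF k st(1)] by simp
      finally show "R t k * (\<Sum>u\<in>B. u (\<pi> s) * u (\<pi> k)) = R t k * (if k = s then 1 else 0)"
        by simp
    qed
    also have "\<dots> = R t s" using st(1) T by (simp add: if_distrib cong: if_cong)
    also have "\<dots> = R s t" using Rs st unfolding symm_def by auto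
    finally show ?thesis .
  qed
  have Z: "(\<Sum>t\<in>T. R s t) = 0" if "\<forall>s\<in>T. (\<Sum>t\<in>T. M s t) = 0" "s \<in> T" for s
  proof -
    define one where "one = (\<lambda>x. if x \<in> T then 1 else (0::real))"
    have "supp_on T one" unfolding one_def supp_on_def by auto
    moreover have "mv T M one = (\<lambda>x. 0 * one x)"
      using that(1) unfolding mv_def one_def by (auto cong: sum.cong)
    ultimately have "(\<Sum>k\<in>T. R s k * one k) = sqrt 0 * one s" using Rv that(2) by blast
    then show ?thesis unfolding one_def by (simp cong: sum.cong)
  qed
  show ?thesis using A Rs Pi Z by blast
qed



lemma aux_pow_sum: "(z::real) = (\<Sum>i\<in>I. f i) \<Longrightarrow> a * z ^ Suc k = (\<Sum>i\<in>I. a * z ^ k * f i)"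
proof -
  assume h: "z = (\<Sum>i\<in>I. f i)"
  have "a * z ^ Suc k = (a * z ^ k) * z" by (simp add: algebra_simps)
  also have "\<dots> = (a * z ^ k) * (\<Sum>i\<in>I. f i)" using h by metis
  finally show ?thesis by (simp add: sum_distrib_left)
qed

lemma inner_pow_pd:
  fixes q :: "'a \<Rightarrow> 'v::euclidean_space"
  assumes T: "finite T"
  shows "0 \<le> (\<Sum>s\<in>T. \<Sum>t\<in>T. b s * b t * (q s \<bullet> q t) ^ k)"
proof (induction k arbitrary: b)
  case 0
  have "(\<Sum>s\<in>T. \<Sum>t\<in>T. b s * b t * (q s \<bullet> q t) ^ 0) = (\<Sum>s\<in>T. b s) * (\<Sum>t\<in>T. b t)"
    by (simp add: sum_product)
  then show ?case by simp
next
  case (Suc k)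
  have "(\<Sum>s\<in>T. \<Sum>t\<in>T. b s * b t * (q s \<bullet> q t) ^ Suc k)
      = (\<Sum>s\<in>T. \<Sum>t\<in>T. \<Sum>i\<in>Basis. b s * b t * (q s \<bullet> q t) ^ k * ((q s \<bullet> i) * (q t \<bullet> i)))"
    by (intro sum.cong refl aux_pow_sum euclidean_inner)
  also have "\<dots> = (\<Sum>s\<in>T. \<Sum>i\<in>Basis. \<Sum>t\<in>T. b s * b t * (q s \<bullet> q t) ^ k * ((q s \<bullet> i) * (q t \<bullet> i)))"
    by (intro sum.cong refl sum.swap)
  also have "\<dots> = (\<Sum>i\<in>Basis. \<Sum>s\<in>T. \<Sum>t\<in>T. b s * b t * (q s \<bullet> q t) ^ k * ((q s \<bullet> i) * (q t \<bullet> i)))"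
    by (rule sum.swap)
  also have "\<dots> = (\<Sum>i\<in>Basis. \<Sum>s\<in>T. \<Sum>t\<in>T. (b s * (q s \<bullet> i)) * (b t * (q t \<bullet> i)) * (q s \<bullet> q t) ^ k)"
    by (simp add: mult_ac)
  also have "\<dots> \<ge> 0" by (intro sum_nonneg Suc.IH)
  finally show ?case .
qed

lemma exp_inner_pd:
  fixes q :: "'a \<Rightarrow> 'v::euclidean_space"
  assumes T: "finite T" and sg: "\<sigma> \<ge> 0"
  shows "0 \<le> (\<Sum>s\<in>T. \<Sum>t\<in>T. b s * b t * exp (\<sigma> * (q s \<bullet> q t)))"
proof -
  have S: "(\<lambda>n. \<Sum>s\<in>T. \<Sum>t\<in>T. b s * b t * ((\<sigma> * (q s \<bullet> q t)) ^ n /\<^sub>R fact n)) sums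
        (\<Sum>s\<in>T. \<Sum>t\<in>T. b s * b t * exp (\<sigma> * (q s \<bullet> q t)))"
  proof -
    have "(\<lambda>n. b s * b t * ((\<sigma> * (q s \<bullet> q t)) ^ n /\<^sub>R fact n)) sums
        (b s * b t * exp (\<sigma> * (q s \<bullet> q t)))" for s t
      by (rule sums_mult[OF exp_converges])
    then have "(\<lambda>n. \<Sum>t\<in>T. b s * b t * ((\<sigma> * (q s \<bullet> q t)) ^ n /\<^sub>R fact n)) sums
        (\<Sum>t\<in>T. b s * b t * exp (\<sigma> * (q s \<bullet> q t)))" for s
      by (rule sums_sum)
    then show ?thesis by (rule sums_sum)
  qed
  have N: "0 \<le> (\<Sum>s\<in>T. \<Sum>t\<in>T. b s * b t * ((\<sigma> * (q s \<bullet> q t)) ^ n /\<^sub>R fact n))" for n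
  proof -
    have "(\<Sum>s\<in>T. \<Sum>t\<in>T. b s * b t * ((\<sigma> * (q s \<bullet> q t)) ^ n /\<^sub>R fact n))
       = (\<sigma> ^ n / fact n) * (\<Sum>s\<in>T. \<Sum>t\<in>T. b s * b t * (q s \<bullet> q t) ^ n)"
    proof -
      have e: "b s * b t * ((\<sigma> * (q s \<bullet> q t)) ^ n /\<^sub>R fact n)
         = (\<sigma> ^ n / fact n) * (b s * b t * (q s \<bullet> q t) ^ n)" for s t
        by (simp add: power_mult_distrib divide_inverse)
      show ?thesis unfolding e sum_distrib_left ..
    qed
    also have "\<dots> \<ge> 0" using sg by (intro mult_nonneg_nonneg inner_pow_pd T) auto
    finally show ?thesis .
  qed
  show ?thesis by (rule sums_le[OF N sums_zero S])
qed

lemma gauss_pd: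
  fixes q :: "'a \<Rightarrow> 'v::euclidean_space"
  assumes T: "finite T" and sg: "\<sigma> \<ge> 0"
  shows "0 \<le> (\<Sum>s\<in>T. \<Sum>t\<in>T. c s * c t * exp (- \<sigma> * (dist (q s) (q t))\<^sup>2))"
proof -
  define b where "b s = c s * exp (- \<sigma> * (q s \<bullet> q s))" for s
  have d: "(dist x y)\<^sup>2 = x \<bullet> x + y \<bullet> y - 2 * (x \<bullet> y)" for x y :: 'v
    by (simp add: dist_norm power2_norm_eq_inner inner_diff inner_commute)
  have "c s * c t * exp (- \<sigma> * (dist (q s) (q t))\<^sup>2) = b s * b t * exp ((2 * \<sigma>) * (q s \<bullet> q t))" for s t
  proof -
    have a: "- \<sigma> * (q s \<bullet> q s + q t \<bullet> q t - 2 * (q s \<bullet> q t))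
        = (- \<sigma> * (q s \<bullet> q s)) + (- \<sigma> * (q t \<bullet> q t)) + (2 * \<sigma>) * (q s \<bullet> q t)"
      by (simp add: algebra_simps)
    show ?thesis unfolding d b_def a exp_add by (simp only: mult_ac)
  qed
  then show ?thesis using exp_inner_pd[OF T, of "2 * \<sigma>" b q] sg by simp
qed

lemma gb_sign:
  fixes a :: real
  assumes a: "0 < a" "a \<le> 1" and k: "1 \<le> k"
  shows "(a gchoose k) * (-1) ^ k \<le> 0"
proof -
  define p where "p k = (\<Prod>i=0..<k. a - of_nat i)" for k
  have ps: "p (Suc k) = p k * (a - of_nat k)" for k unfolding p_def by simp
  have "p k * (-1) ^ k \<le> 0" using k
  proof (induction k)
    case 0 then show ?case by simp
  next
    case (Suc k)
    show ?case
    proof (cases "k = 0")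
      case True then show ?thesis using a by (simp add: p_def)
    next
      case False
      then have ih: "p k * (-1) ^ k \<le> 0" using Suc.IH by simp
      have "p (Suc k) * (-1) ^ Suc k = (p k * (-1) ^ k) * (of_nat k - a)"
        by (simp add: ps algebra_simps)
      also have "\<dots> \<le> 0" by (rule mult_nonpos_nonneg[OF ih]) (use False a in auto)
      finally show ?thesis .
    qed
  qed
  moreover have "(a gchoose k) = p k / fact k" unfolding gbinomial_prod_rev p_def by simp
  ultimately show ?thesis
    by (metis (no_types, lifting) divide_nonpos_pos fact_gt_zero times_divide_eq_left)
qed

lemma series_bound:
  fixes q :: "'a \<Rightarrow> 'v::euclidean_space"
  assumes T: "finite T" and c: "(\<Sum>s\<in>T. c s) = 0" and a: "0 < \<alpha>" "\<alpha> \<le> 1" and L: "1 < L"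
  shows "(\<Sum>s\<in>T. \<Sum>t\<in>T. c s * c t *
     (1 - (1 - 1 / L\<^sup>2) * exp (- (dist (q s) (q t))\<^sup>2 / L)) powr \<alpha>) \<le> 0"
proof -
  define \<rho> where "\<rho> = 1 - 1 / L\<^sup>2"
  have L2: "1 < L\<^sup>2" using L by (simp add: one_less_power)
  have \<rho>: "0 < \<rho>" "\<rho> < 1" unfolding \<rho>_def using L2 by (auto simp: divide_less_eq)
  define z where "z s t = - \<rho> * exp (- (dist (q s) (q t))\<^sup>2 / L)" for s t
  have zb: "\<bar>z s t\<bar> < 1" for s t
  proof -
    have "exp (- (dist (q s) (q t))\<^sup>2 / L) \<le> 1" using L by simp
    then have "\<rho> * exp (- (dist (q s) (q t))\<^sup>2 / L) \<le> \<rho>"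
      using \<rho> by (simp add: mult_left_le)
    then have "\<rho> * exp (- (dist (q s) (q t))\<^sup>2 / L) < 1"
      using \<rho> by linarith
    then show ?thesis unfolding z_def using \<rho> by (simp add: abs_mult)
  qed
  have S: "(\<lambda>n. \<Sum>s\<in>T. \<Sum>t\<in>T. c s * c t * ((\<alpha> gchoose n) * (z s t) ^ n)) sums
      (\<Sum>s\<in>T. \<Sum>t\<in>T. c s * c t * (1 + z s t) powr \<alpha>)"
  proof -
    have "(\<lambda>n. c s * c t * ((\<alpha> gchoose n) * (z s t) ^ n)) sums (c s * c t * (1 + z s t) powr \<alpha>)" for s t
      by (rule sums_mult[OF gen_binomial_real[OF zb]])
    then have "(\<lambda>n. \<Sum>t\<in>T. c s * c t * ((\<alpha> gchoose n) * (z s t) ^ n)) sums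
        (\<Sum>t\<in>T. c s * c t * (1 + z s t) powr \<alpha>)" for s
      by (rule sums_sum)
    then show ?thesis by (rule sums_sum)
  qed
  have N: "(\<Sum>s\<in>T. \<Sum>t\<in>T. c s * c t * ((\<alpha> gchoose n) * (z s t) ^ n)) \<le> 0" for n
  proof (cases "n = 0")
    case True
    have "(\<Sum>s\<in>T. \<Sum>t\<in>T. c s * c t) = (\<Sum>s\<in>T. c s) * (\<Sum>t\<in>T. c t)" by (simp add: sum_product)
    then show ?thesis using True c by simp
  next
    case False
    have e: "c s * c t * ((\<alpha> gchoose n) * (z s t) ^ n) =
       ((\<alpha> gchoose n) * (-1) ^ n * \<rho> ^ n) * (c s * c t * exp (- (real n / L) * (dist (q s) (q t))\<^sup>2))"
      for s t
    proof -
      define E where "E = exp (- (dist (q s) (q t))\<^sup>2 / L)"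
      have En: "E ^ n = exp (- (real n / L) * (dist (q s) (q t))\<^sup>2)"
        unfolding E_def by (simp add: exp_of_nat_mult[symmetric])
      have "(z s t) ^ n = ((-1) * \<rho> * E) ^ n" unfolding z_def E_def by simp
      also have "\<dots> = (-1) ^ n * \<rho> ^ n * E ^ n" by (simp only: power_mult_distrib)
      finally have "(z s t) ^ n = (-1) ^ n * \<rho> ^ n * exp (- (real n / L) * (dist (q s) (q t))\<^sup>2)"
        unfolding En .
      then show ?thesis by (simp only: mult_ac)
    qed
    have "(\<Sum>s\<in>T. \<Sum>t\<in>T. c s * c t * ((\<alpha> gchoose n) * (z s t) ^ n)) =
      ((\<alpha> gchoose n) * (-1) ^ n * \<rho> ^ n) *
      (\<Sum>s\<in>T. \<Sum>t\<in>T. c s * c t * exp (- (real n / L) * (dist (q s) (q t))\<^sup>2))"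
      unfolding e sum_distrib_left ..
    also have "\<dots> \<le> 0"
    proof (rule mult_nonpos_nonneg)
      show "(\<alpha> gchoose n) * (-1) ^ n * \<rho> ^ n \<le> 0"
        using gb_sign[OF a, of n] False \<rho> by (intro mult_nonpos_nonneg[of "(\<alpha> gchoose n) * (-1) ^ n"]) auto
      show "0 \<le> (\<Sum>s\<in>T. \<Sum>t\<in>T. c s * c t * exp (- (real n / L) * (dist (q s) (q t))\<^sup>2))"
        using L by (intro gauss_pd T) auto
    qed
    finally show ?thesis .
  qed
  have F: "(\<Sum>s\<in>T. \<Sum>t\<in>T. c s * c t * (1 + z s t) powr \<alpha>) \<le> 0"
    by (rule sums_le[OF N S sums_zero])
  have eqz: "1 + z s t = 1 - (1 - 1 / L\<^sup>2) * exp (- (dist (q s) (q t))\<^sup>2 / L)" for s t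
    unfolding z_def \<rho>_def by (simp add: algebra_simps)
  show ?thesis using F by (simp only: eqz)
qed

lemma base_lim:
  assumes "x \<ge> (0::real)"
  shows "((\<lambda>L::real. L * (1 - (1 - 1 / L\<^sup>2) * exp (- x / L))) \<longlongrightarrow> x) at_top"
proof (cases "x = 0")
  case True
  then show ?thesis by simp real_asymp
next
  case False
  then have "x > 0" using assms by simp
  then show ?thesis by real_asymp
qed

lemma cnd_zero:
  fixes q :: "'a \<Rightarrow> 'v"
  assumes T: "finite T"
  shows "0 \<le> (\<Sum>s\<in>T. \<Sum>t\<in>T. c s * c t * (if q s = q t then 1 else 0::real))"
proof -
  define C where "C y = (\<Sum>t\<in>{t\<in>T. q t = y}. c t)" for y
  have "(\<Sum>s\<in>T. \<Sum>t\<in>T. c s * c t * (if q s = q t then 1 else 0::real)) = (\<Sum>s\<in>T. c s * C (q s))"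
  proof (intro sum.cong refl)
    fix s assume "s \<in> T"
    have "(\<Sum>t\<in>T. c s * c t * (if q s = q t then 1 else 0::real)) = (\<Sum>t\<in>T. c s * (if q t = q s then c t else 0))"
      by (intro sum.cong) auto
    also have "\<dots> = c s * C (q s)" unfolding C_def sum.inter_filter[OF T] sum_distrib_left ..
    finally show "(\<Sum>t\<in>T. c s * c t * (if q s = q t then 1 else 0::real)) = c s * C (q s)" .
  qed
  also have "\<dots> = (\<Sum>y\<in>q ` T. \<Sum>s\<in>{s\<in>T. q s = y}. c s * C (q s))"
    by (rule sum.image_gen[OF T])
  also have "\<dots> = (\<Sum>y\<in>q ` T. C y * C y)"
  proof (intro sum.cong refl)
    fix y assume "y \<in> q ` T"
    have "(\<Sum>s\<in>{s\<in>T. q s = y}. c s * C (q s)) = (\<Sum>s\<in>{s\<in>T. q s = y}. c s * C y)"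
      by (intro sum.cong) auto
    also have "\<dots> = (\<Sum>s\<in>{s\<in>T. q s = y}. c s) * C y" by (rule sum_distrib_right[symmetric])
    also have "\<dots> = C y * C y" unfolding C_def ..
    finally show "(\<Sum>s\<in>{s\<in>T. q s = y}. c s * C (q s)) = C y * C y" .
  qed
  also have "\<dots> \<ge> 0" by (intro sum_nonneg) simp
  finally show ?thesis .
qed

lemma cnd_powr:
  fixes q :: "'a \<Rightarrow> 'v::euclidean_space"
  assumes T: "finite T" and c: "(\<Sum>s\<in>T. c s) = 0" and a: "0 \<le> \<alpha>" "\<alpha> \<le> 1"
  shows "(\<Sum>s\<in>T. \<Sum>t\<in>T. c s * c t * (dist (q s) (q t) powr \<alpha>)\<^sup>2) \<le> 0"
proof (cases "\<alpha> = 0")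
  case True
  have e: "(dist (q s) (q t) powr \<alpha>)\<^sup>2 = 1 - (if q s = q t then 1 else 0)" for s t
    using True by simp
  have "(\<Sum>s\<in>T. \<Sum>t\<in>T. c s * c t * (dist (q s) (q t) powr \<alpha>)\<^sup>2) =
     (\<Sum>s\<in>T. \<Sum>t\<in>T. c s * c t) - (\<Sum>s\<in>T. \<Sum>t\<in>T. c s * c t * (if q s = q t then 1 else 0::real))"
    unfolding e by (simp add: right_diff_distrib sum_subtractf)
  also have "(\<Sum>s\<in>T. \<Sum>t\<in>T. c s * c t) = (\<Sum>s\<in>T. c s) * (\<Sum>t\<in>T. c t)" by (simp add: sum_product)
  finally show ?thesis using c cnd_zero[OF T, of c q] by simp
next
  case False
  then have a0: "0 < \<alpha>" using a by simp
  define x where "x s t = (dist (q s) (q t))\<^sup>2" for s t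
  define G where "G L = (\<Sum>s\<in>T. \<Sum>t\<in>T. c s * c t *
      (L * (1 - (1 - 1 / L\<^sup>2) * exp (- x s t / L))) powr \<alpha>)" for L :: real
  have base_nn: "0 \<le> 1 - (1 - 1 / L\<^sup>2) * exp (- x s t / L)" if L: "1 < L" for L s t
  proof -
    have "1 / L\<^sup>2 \<le> 1" using L by (simp add: one_less_power less_imp_le)
    moreover have "0 \<le> 1 / L\<^sup>2" by simp
    moreover have "exp (- x s t / L) \<le> 1" using L unfolding x_def by simp
    ultimately have "(1 - 1 / L\<^sup>2) * exp (- x s t / L) \<le> 1 * 1"
      by (intro mult_mono) auto
    then show ?thesis by simp
  qed
  have ev: "\<forall>\<^sub>F L in at_top. G L \<le> 0"
    using eventually_gt_at_top[of "1::real"]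
  proof eventually_elim
    case (elim L)
    have "G L = L powr \<alpha> * (\<Sum>s\<in>T. \<Sum>t\<in>T. c s * c t *
        (1 - (1 - 1 / L\<^sup>2) * exp (- x s t / L)) powr \<alpha>)"
      unfolding G_def sum_distrib_left
      using elim base_nn[OF elim] by (intro sum.cong refl) (simp add: powr_mult mult_ac)
    also have "\<dots> \<le> 0"
      using series_bound[OF T c a0 a(2) elim, of q] unfolding x_def
      by (intro mult_nonneg_nonpos) auto
    finally show ?case .
  qed
  have lim: "(G \<longlongrightarrow> (\<Sum>s\<in>T. \<Sum>t\<in>T. c s * c t * (x s t) powr \<alpha>)) at_top"
    unfolding G_def
  proof (intro tendsto_sum tendsto_mult_left)
    fix s t
    show "((\<lambda>L. (L * (1 - (1 - 1 / L\<^sup>2) * exp (- x s t / L))) powr \<alpha>) \<longlongrightarrow> x s t powr \<alpha>) at_top"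
    proof (rule tendsto_powr')
      show "((\<lambda>L. L * (1 - (1 - 1 / L\<^sup>2) * exp (- x s t / L))) \<longlongrightarrow> x s t) at_top"
        by (rule base_lim) (simp add: x_def)
      show "((\<lambda>L. \<alpha>) \<longlongrightarrow> \<alpha>) at_top" by simp
      show "x s t \<noteq> 0 \<or> 0 < \<alpha> \<and> (\<forall>\<^sub>F L in at_top. 0 \<le> L * (1 - (1 - 1 / L\<^sup>2) * exp (- x s t / L)))"
      proof -
        have "\<forall>\<^sub>F L in at_top. 0 \<le> L * (1 - (1 - 1 / L\<^sup>2) * exp (- x s t / L))"
          using eventually_gt_at_top[of "1::real"]
          by (rule eventually_mono) (intro mult_nonneg_nonneg base_nn, auto)
        then show ?thesis using a0 by simp
      qed
    qed
  qed
  have "(\<Sum>s\<in>T. \<Sum>t\<in>T. c s * c t * (x s t) powr \<alpha>) \<le> 0"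
    by (rule tendsto_le[OF trivial_limit_at_top_linorder tendsto_const lim ev])
  moreover have "(x s t) powr \<alpha> = (dist (q s) (q t) powr \<alpha>)\<^sup>2" for s t
  proof (cases "dist (q s) (q t) = 0")
    case True then show ?thesis using a0 unfolding x_def by simp
  next
    case False
    then have "0 < dist (q s) (q t)" by simp
    then have e1: "(dist (q s) (q t))\<^sup>2 = dist (q s) (q t) powr 2"
      by (simp add: powr_numeral)
    have "(dist (q s) (q t) powr 2) powr \<alpha> = dist (q s) (q t) powr (\<alpha> + \<alpha>)"
      by (simp only: powr_powr mult_2)
    also have "\<dots> = (dist (q s) (q t) powr \<alpha>)\<^sup>2" by (simp only: powr_add power2_eq_square)
    finally show ?thesis unfolding x_def e1 .
  qed
  ultimately show ?thesis by simp
qed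



lemma sum_row_zero:
  fixes M :: "'a \<Rightarrow> 'a \<Rightarrow> real"
  assumes "\<forall>s\<in>T. (\<Sum>t\<in>T. M s t) = 0"
  shows "(\<Sum>s\<in>T. \<Sum>t\<in>T. M s t * f s) = 0"
proof -
  have "(\<Sum>s\<in>T. \<Sum>t\<in>T. M s t * f s) = (\<Sum>s\<in>T. f s * (\<Sum>t\<in>T. M s t))"
    by (simp add: sum_distrib_left mult_ac)
  also have "\<dots> = 0" using assms by simp
  finally show ?thesis .
qed

lemma sum_col_zero:
  fixes M :: "'a \<Rightarrow> 'a \<Rightarrow> real"
  assumes "\<forall>t\<in>T. (\<Sum>s\<in>T. M s t) = 0"
  shows "(\<Sum>s\<in>T. \<Sum>t\<in>T. M s t * f t) = 0"
proof -
  have "(\<Sum>s\<in>T. \<Sum>t\<in>T. M s t * f t) = (\<Sum>t\<in>T. \<Sum>s\<in>T. M s t * f t)" by (rule sum.swap)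
  also have "\<dots> = (\<Sum>t\<in>T. f t * (\<Sum>s\<in>T. M s t))" by (simp add: sum_distrib_left mult_ac)
  also have "\<dots> = 0" using assms by simp
  finally show ?thesis .
qed

lemma center_props:
  fixes N :: "'a \<Rightarrow> 'a \<Rightarrow> real"
  assumes T: "finite T" "T \<noteq> {}" and Ns: "symm T N" and N0: "\<forall>s\<in>T. N s s = 0"
    and cnd: "\<And>c. (\<Sum>s\<in>T. c s) = 0 \<Longrightarrow> (\<Sum>s\<in>T. \<Sum>t\<in>T. c s * c t * N s t) \<le> 0"
  defines "r \<equiv> \<lambda>s. (\<Sum>t\<in>T. N s t) / card T"
  defines "\<rho> \<equiv> (\<Sum>s\<in>T. r s) / card T"
  defines "M \<equiv> \<lambda>s t. - (N s t - r s - r t + \<rho>) / 2"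
  shows "symm T M" "psd T M" "\<forall>s\<in>T. (\<Sum>t\<in>T. M s t) = 0"
    "\<forall>s\<in>T. \<forall>t\<in>T. M s s + M t t - 2 * M s t = N s t"
proof -
  have cT: "real (card T) > 0" using T by (simp add: card_gt_0_iff)
  show Ms: "symm T M" using Ns unfolding symm_def M_def by auto
  have rs: "(\<Sum>t\<in>T. N s t) = card T * r s" for s unfolding r_def using cT by simp
  have rr: "(\<Sum>t\<in>T. r t) = card T * \<rho>" unfolding \<rho>_def using cT by simp
  show row: "\<forall>s\<in>T. (\<Sum>t\<in>T. M s t) = 0"
  proof
    fix s assume "s \<in> T"
    have "(\<Sum>t\<in>T. M s t) = - ((\<Sum>t\<in>T. N s t) - card T * r s - (\<Sum>t\<in>T. r t) + card T * \<rho>) / 2"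
      unfolding M_def by (simp add: sum_divide_distrib[symmetric] sum_subtractf sum.distrib sum_negf)
    then show "(\<Sum>t\<in>T. M s t) = 0" using rs rr by simp
  qed
  have col: "\<forall>t\<in>T. (\<Sum>s\<in>T. M s t) = 0"
    using row Ms unfolding symm_def by (metis (no_types, lifting) sum.cong)
  show "\<forall>s\<in>T. \<forall>t\<in>T. M s s + M t t - 2 * M s t = N s t"
    using N0 unfolding M_def by (auto simp: field_simps)
  define Q where "Q v = (\<Sum>s\<in>T. \<Sum>t\<in>T. M s t * (v s * v t))" for v
  have ipQ: "ip T (mv T M v) v = Q v" for v
    unfolding ip_def mv_def Q_def by (simp add: sum_distrib_right sum_distrib_left mult_ac)
  have shift: "Q (\<lambda>s. w s + m) = Q w" for w m
  proof -
    have "Q (\<lambda>s. w s + m) = (\<Sum>s\<in>T. \<Sum>t\<in>T. M s t * (w s * w t) + (M s t * (m * w s) +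
        (M s t * (m * w t) + M s t * (m * m))))"
      unfolding Q_def by (intro sum.cong refl) (simp add: algebra_simps)
    also have "\<dots> = Q w + ((\<Sum>s\<in>T. \<Sum>t\<in>T. M s t * (m * w s)) + ((\<Sum>s\<in>T. \<Sum>t\<in>T. M s t * (m * w t))
        + (\<Sum>s\<in>T. \<Sum>t\<in>T. M s t * (m * m))))"
      unfolding Q_def by (simp only: sum.distrib)
    also have "\<dots> = Q w"
      using sum_row_zero[OF row, of "\<lambda>s. m * w s"] sum_col_zero[OF col, of "\<lambda>t. m * w t"]
        sum_row_zero[OF row, of "\<lambda>s. m * m"] by simp
    finally show ?thesis .
  qed
  have zero: "Q w = - (\<Sum>s\<in>T. \<Sum>t\<in>T. w s * w t * N s t) / 2" if w: "(\<Sum>s\<in>T. w s) = 0" for w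
  proof -
    have a: "(\<Sum>s\<in>T. \<Sum>t\<in>T. f s * (w s * w t)) = 0" for f :: "'a \<Rightarrow> real"
    proof -
      have "(\<Sum>s\<in>T. \<Sum>t\<in>T. f s * (w s * w t)) = (\<Sum>s\<in>T. f s * w s * (\<Sum>t\<in>T. w t))"
        by (simp add: sum_distrib_left mult_ac)
      then show ?thesis using w by simp
    qed
    have b: "(\<Sum>s\<in>T. \<Sum>t\<in>T. f t * (w s * w t)) = 0" for f :: "'a \<Rightarrow> real"
    proof -
      have "(\<Sum>s\<in>T. \<Sum>t\<in>T. f t * (w s * w t)) = (\<Sum>t\<in>T. \<Sum>s\<in>T. f t * (w t * w s))"
        by (subst sum.swap) (simp add: mult_ac)
      then show ?thesis using a[of f] by simp
    qed
    have "Q w = (\<Sum>s\<in>T. \<Sum>t\<in>T. (- (1/2)) * (w s * w t * N s t) + ((1/2) * r s * (w s * w t) +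
        ((1/2) * r t * (w s * w t) + (- (1/2) * \<rho>) * (w s * w t))))"
      unfolding Q_def M_def by (intro sum.cong refl) (simp add: field_simps)
    also have "\<dots> = (- (1/2)) * (\<Sum>s\<in>T. \<Sum>t\<in>T. w s * w t * N s t) +
        ((\<Sum>s\<in>T. \<Sum>t\<in>T. ((1/2) * r s) * (w s * w t)) +
        ((\<Sum>s\<in>T. \<Sum>t\<in>T. ((1/2) * r t) * (w s * w t)) +
        (\<Sum>s\<in>T. \<Sum>t\<in>T. (- (1/2) * \<rho>) * (w s * w t))))"
      by (simp only: sum.distrib sum_distrib_left)
    also have "\<dots> = - (\<Sum>s\<in>T. \<Sum>t\<in>T. w s * w t * N s t) / 2"
    proof -
      have z1: "(\<Sum>s\<in>T. \<Sum>t\<in>T. ((1/2) * r s) * (w s * w t)) = 0" by (rule a)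
      have z2: "(\<Sum>s\<in>T. \<Sum>t\<in>T. ((1/2) * r t) * (w s * w t)) = 0" by (rule b)
      have z3: "(\<Sum>s\<in>T. \<Sum>t\<in>T. (- (1/2) * \<rho>) * (w s * w t)) = 0" by (rule a)
      show ?thesis by (simp only: z1 z2 z3)
    qed
    finally show ?thesis .
  qed
  show "psd T M" unfolding psd_def
  proof
    fix v
    define m where "m = (\<Sum>s\<in>T. v s) / card T"
    define w where "w s = v s - m" for s
    have w0: "(\<Sum>s\<in>T. w s) = 0" unfolding w_def m_def using cT by (simp add: sum_subtractf)
    have "v = (\<lambda>s. w s + m)" unfolding w_def by simp
    then have "ip T (mv T M v) v = Q w" using ipQ shift by metis
    also have "\<dots> \<ge> 0" using zero[OF w0] cnd[OF w0] by simp
    finally show "ip T (mv T M v) v \<ge> 0" .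
  qed
qed

lemma center_inv:
  fixes N :: "'a \<Rightarrow> 'a \<Rightarrow> real"
  assumes pi: "bij_betw \<pi> T T" "\<forall>s\<in>T. \<forall>t\<in>T. N (\<pi> s) (\<pi> t) = N s t"
  defines "r \<equiv> \<lambda>s. (\<Sum>t\<in>T. N s t) / card T"
  defines "\<rho> \<equiv> (\<Sum>s\<in>T. r s) / card T"
  defines "M \<equiv> \<lambda>s t. - (N s t - r s - r t + \<rho>) / 2"
  shows "\<forall>s\<in>T. \<forall>t\<in>T. M (\<pi> s) (\<pi> t) = M s t"
proof -
  have "r (\<pi> s) = r s" if "s \<in> T" for s
  proof -
    have "(\<Sum>t\<in>T. N (\<pi> s) t) = (\<Sum>t\<in>T. N (\<pi> s) (\<pi> t))"
      using sum.reindex_bij_betw[OF pi(1), of "\<lambda>t. N (\<pi> s) t"] by simp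
    also have "\<dots> = (\<Sum>t\<in>T. N s t)" using pi(2) that by simp
    finally show ?thesis unfolding r_def by simp
  qed
  then show ?thesis unfolding M_def using pi(2) by simp
qed



lemma Min_powr:
  fixes f :: "'a \<Rightarrow> real"
  assumes "finite C" "C \<noteq> {}" "\<forall>h\<in>C. f h \<ge> 0" "0 \<le> \<alpha>"
  shows "Min ((\<lambda>h. f h powr \<alpha>) ` C) = (Min (f ` C)) powr \<alpha>"
proof -
  have fin: "finite (f ` C)" "f ` C \<noteq> {}" using assms by auto
  obtain h0 where h0: "h0 \<in> C" "f h0 = Min (f ` C)" using Min_in[OF fin] by auto
  show ?thesis
  proof (rule Min_eqI)
    show "finite ((\<lambda>h. f h powr \<alpha>) ` C)" using assms by simp
    show "Min (f ` C) powr \<alpha> \<in> (\<lambda>h. f h powr \<alpha>) ` C" using h0 by (metis image_eqI)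
    fix y assume "y \<in> (\<lambda>h. f h powr \<alpha>) ` C"
    then obtain h where h: "h \<in> C" "y = f h powr \<alpha>" by auto
    have "Min (f ` C) \<le> f h" using fin h by simp
    moreover have "0 \<le> Min (f ` C)" using h0 assms(3) by metis
    ultimately show "Min (f ` C) powr \<alpha> \<le> y" using h assms(4) by (simp add: powr_mono2)
  qed
qed

theorem corollary1:
  fixes X :: "'x set" and d :: "'x \<Rightarrow> 'x \<Rightarrow> real" and n :: nat
    and G :: "('g, 'b) monoid_scheme" and \<phi> :: "'g \<Rightarrow> real^'m \<Rightarrow> real^'m"
  assumes "Metric_space X d"
    and "finite X" and "card X = n"
    and "group G" and "finite (carrier G)"
    and "group_action G UNIV \<phi>"
    and "\<forall>g\<in>carrier G. \<forall>x y. dist (\<phi> g x) (\<phi> g y) = dist x y"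
    and "\<exists>F :: 'x \<Rightarrow> real^'m. \<forall>x\<in>X. \<forall>y\<in>X. d x y = quot_dist G \<phi> (F x) (F y)"
  shows "\<forall>\<alpha>::real. 0 \<le> \<alpha> \<and> \<alpha> \<le> 1 \<longrightarrow>
           (\<exists>F. F ` X \<subseteq> L1 n G \<and>
                (\<forall>x\<in>X. \<forall>y\<in>X. d x y powr \<alpha> = Q_dist n G (F x) (F y)))"
proof (intro allI impI)
  fix \<alpha> :: real assume "0 \<le> \<alpha> \<and> \<alpha> \<le> 1"
  then have a: "0 \<le> \<alpha>" "\<alpha> \<le> 1" by auto
  obtain F0 :: "'x \<Rightarrow> real^'m" where F0: "\<forall>x\<in>X. \<forall>y\<in>X. d x y = quot_dist G \<phi> (F0 x) (F0 y)"
    using assms(8) by blast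
  interpret grp: group G by (rule assms(4))
  interpret act: group_action G UNIV \<phi> by (rule assms(6))
  have finG: "finite (carrier G)" by (rule assms(5))
  have iso: "\<And>g x y. g \<in> carrier G \<Longrightarrow> dist (\<phi> g x) (\<phi> g y) = dist x y" using assms(7) by blast
  have comp: "\<And>g h x. g \<in> carrier G \<Longrightarrow> h \<in> carrier G \<Longrightarrow> \<phi> (g \<otimes>\<^bsub>G\<^esub> h) x = \<phi> g (\<phi> h x)"
    using act.composition_rule by blast
  have phi1: "\<phi> \<one>\<^bsub>G\<^esub> x = x" for x
    using act.id_eq_one by (metis restrict_apply UNIV_I)
  show "\<exists>F. F ` X \<subseteq> L1 n G \<and> (\<forall>x\<in>X. \<forall>y\<in>X. d x y powr \<alpha> = Q_dist n G (F x) (F y))"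
  proof (cases "X = {}")
    case True then show ?thesis by (intro exI[of _ "\<lambda>_ _ _. 0"]) simp
  next
    case Xne: False
    have npos: "n > 0" using Xne assms(2,3) by (metis card_gt_0_iff)
    obtain e where e: "bij_betw e {..<n} X"
      using ex_bij_betw_nat_finite[OF assms(2)] assms(3) by (metis atLeast0LessThan)
    define T where "T = {..<n} \<times> carrier G"
    have finT: "finite T" unfolding T_def using finG by simp
    have Tne: "T \<noteq> {}" unfolding T_def using npos by auto
    define q where "q p = \<phi> (snd p) (F0 (e (fst p)))" for p :: "nat \<times> 'g"
    define N where "N s t = (dist (q s) (q t) powr \<alpha>)\<^sup>2" for s t
    define r where "r = (\<lambda>s. (\<Sum>t\<in>T. N s t) / card T)"
    define \<rho> where "\<rho> = (\<Sum>s\<in>T. r s) / card T"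
    define M where "M = (\<lambda>s t. - (N s t - r s - r t + \<rho>) / 2)"
    have Ns: "symm T N" unfolding symm_def N_def by (simp add: dist_commute)
    have N0: "\<forall>s\<in>T. N s s = 0" unfolding N_def by simp
    have cnd: "(\<Sum>s\<in>T. \<Sum>t\<in>T. c s * c t * N s t) \<le> 0" if "(\<Sum>s\<in>T. c s) = 0" for c
      unfolding N_def by (rule cnd_powr[OF finT that a])
    have CP1: "symm T M" unfolding M_def r_def \<rho>_def by (rule center_props(1)[OF finT Tne Ns N0 cnd])
    have CP2: "psd T M" unfolding M_def r_def \<rho>_def by (rule center_props(2)[OF finT Tne Ns N0 cnd])
    have CP3: "\<forall>s\<in>T. (\<Sum>t\<in>T. M s t) = 0"
      unfolding M_def r_def \<rho>_def by (rule center_props(3)[OF finT Tne Ns N0 cnd])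
    have CP4: "\<forall>s\<in>T. \<forall>t\<in>T. M s s + M t t - 2 * M s t = N s t"
      unfolding M_def r_def \<rho>_def by (rule center_props(4)[OF finT Tne Ns N0 cnd])
    define \<pi> where "\<pi> h p = (fst p, h \<otimes>\<^bsub>G\<^esub> snd p)" for h and p :: "nat \<times> 'g"
    have pibij: "bij_betw (\<pi> h) T T" if h: "h \<in> carrier G" for h
    proof (rule bij_betwI[where g = "\<pi> (inv\<^bsub>G\<^esub> h)"])
      show "\<pi> h \<in> T \<rightarrow> T" using h unfolding T_def \<pi>_def by auto
      show "\<pi> (inv\<^bsub>G\<^esub> h) \<in> T \<rightarrow> T" using h unfolding T_def \<pi>_def by auto
      fix p assume "p \<in> T"
      then show "\<pi> (inv\<^bsub>G\<^esub> h) (\<pi> h p) = p" "\<pi> h (\<pi> (inv\<^bsub>G\<^esub> h) p) = p"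
        using h unfolding T_def \<pi>_def by (auto simp: grp.m_assoc[symmetric])
    qed
    have qpi: "q (\<pi> h p) = \<phi> h (q p)" if "h \<in> carrier G" "p \<in> T" for h p
      using that comp unfolding q_def \<pi>_def T_def by auto
    have Npi: "\<forall>s\<in>T. \<forall>t\<in>T. N (\<pi> h s) (\<pi> h t) = N s t" if h: "h \<in> carrier G" for h
      using h unfolding N_def by (simp add: qpi iso)
    have Mpi: "\<forall>s\<in>T. \<forall>t\<in>T. M (\<pi> h s) (\<pi> h t) = M s t" if h: "h \<in> carrier G" for h
      using center_inv[OF pibij[OF h] Npi[OF h]] unfolding M_def r_def \<rho>_def .
    obtain R where R1: "\<forall>s\<in>T. \<forall>t\<in>T. (\<Sum>k\<in>T. R k s * R k t) = M s t"
      and R2: "symm T R"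
      and R3: "\<forall>\<pi>. bij_betw \<pi> T T \<and> (\<forall>s\<in>T. \<forall>t\<in>T. M (\<pi> s) (\<pi> t) = M s t) \<longrightarrow>
          (\<forall>s\<in>T. \<forall>t\<in>T. R (\<pi> s) (\<pi> t) = R s t)"
      and R4: "(\<forall>s\<in>T. (\<Sum>t\<in>T. M s t) = 0) \<longrightarrow> (\<forall>s\<in>T. (\<Sum>t\<in>T. R s t) = 0)"
      using psd_sqrt[OF finT CP1 CP2] by blast
    have Rpi: "R (\<pi> h s) (\<pi> h t) = R s t" if "h \<in> carrier G" "s \<in> T" "t \<in> T" for h s t
      using R3 pibij[OF that(1)] Mpi[OF that(1)] that(2,3) by blast
    have Rcol: "(\<Sum>k\<in>T. R k t) = 0" if "t \<in> T" for t
    proof -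
      have "(\<Sum>k\<in>T. R k t) = (\<Sum>k\<in>T. R t k)" using R2 that unfolding symm_def by (intro sum.cong) auto
      then show ?thesis using R4 CP3 that by simp
    qed
    define \<kappa> where "\<kappa> = 1 / real (card T)"
    define ix where "ix x = inv_into {..<n} e x" for x
    have ix: "ix x < n" "e (ix x) = x" if "x \<in> X" for x
      using that e unfolding ix_def bij_betw_def
      by (auto intro: inv_into_into f_inv_into_f)
    define F where "F x = (\<lambda>j g. if j < n \<and> g \<in> carrier G then R (j, g) (ix x, \<one>\<^bsub>G\<^esub>) + \<kappa> else 0)" for x
    have sumT: "(\<Sum>j<n. \<Sum>g\<in>carrier G. f (j, g)) = (\<Sum>k\<in>T. f k)" for f :: "nat \<times> 'g \<Rightarrow> real"
      unfolding T_def by (simp add: sum.cartesian_product)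
    have L1: "F x \<in> L1 n G" if x: "x \<in> X" for x
    proof -
      have aT: "(ix x, \<one>\<^bsub>G\<^esub>) \<in> T" unfolding T_def using ix[OF x] by simp
      have "(\<Sum>j<n. \<Sum>g\<in>carrier G. F x j g) = (\<Sum>j<n. \<Sum>g\<in>carrier G. R (j, g) (ix x, \<one>\<^bsub>G\<^esub>) + \<kappa>)"
        unfolding F_def by (intro sum.cong refl) auto
      also have "\<dots> = (\<Sum>k\<in>T. R k (ix x, \<one>\<^bsub>G\<^esub>) + \<kappa>)" by (rule sumT)
      also have "\<dots> = (\<Sum>k\<in>T. R k (ix x, \<one>\<^bsub>G\<^esub>)) + card T * \<kappa>" by (simp add: sum.distrib)
      also have "\<dots> = 1" using Rcol[OF aT] Tne finT unfolding \<kappa>_def by simp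
      finally show ?thesis unfolding L1_def F_def by auto
    qed
    have dist_eq: "RG_dist n G (F x) (reg_act G h (F y)) = dist (F0 x) (\<phi> h (F0 y)) powr \<alpha>"
      if x: "x \<in> X" and y: "y \<in> X" and h: "h \<in> carrier G" for x y h
    proof -
      define a where "a = (ix x, \<one>\<^bsub>G\<^esub>)"
      define b where "b = (ix y, h)"
      have aT: "a \<in> T" and bT: "b \<in> T" unfolding a_def b_def T_def using ix x y h by auto
      have trm: "F x j g - reg_act G h (F y) j g = R (j, g) a - R (j, g) b"
        if "j < n" "g \<in> carrier G" for j g
      proof -
        have ig: "inv\<^bsub>G\<^esub> h \<otimes>\<^bsub>G\<^esub> g \<in> carrier G" using h that by simp
        have "R (j, inv\<^bsub>G\<^esub> h \<otimes>\<^bsub>G\<^esub> g) (ix y, \<one>\<^bsub>G\<^esub>) =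
            R (\<pi> h (j, inv\<^bsub>G\<^esub> h \<otimes>\<^bsub>G\<^esub> g)) (\<pi> h (ix y, \<one>\<^bsub>G\<^esub>))"
          using Rpi[OF h, of "(j, inv\<^bsub>G\<^esub> h \<otimes>\<^bsub>G\<^esub> g)" "(ix y, \<one>\<^bsub>G\<^esub>)"] ig that ix[OF y]
          unfolding T_def by simp
        also have "\<dots> = R (j, g) b"
          unfolding \<pi>_def b_def using h that by (simp add: grp.m_assoc[symmetric])
        finally show ?thesis
          unfolding F_def reg_act_def a_def using that ig by simp
      qed
      have "(\<Sum>j<n. \<Sum>g\<in>carrier G. (F x j g - reg_act G h (F y) j g)\<^sup>2)
          = (\<Sum>j<n. \<Sum>g\<in>carrier G. (R (j, g) a - R (j, g) b)\<^sup>2)"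
        using trm by (intro sum.cong refl) auto
      also have "\<dots> = (\<Sum>k\<in>T. (R k a - R k b)\<^sup>2)" by (rule sumT)
      also have "\<dots> = (\<Sum>k\<in>T. R k a * R k a) + (\<Sum>k\<in>T. R k b * R k b) - 2 * (\<Sum>k\<in>T. R k a * R k b)"
        by (simp add: power2_eq_square algebra_simps sum.distrib sum_subtractf sum_distrib_left)
      also have "\<dots> = M a a + M b b - 2 * M a b" using R1 aT bT by simp
      also have "\<dots> = N a b" using CP4 aT bT by simp
      finally have S: "(\<Sum>j<n. \<Sum>g\<in>carrier G. (F x j g - reg_act G h (F y) j g)\<^sup>2) = N a b" .
      have qa: "q a = F0 x" unfolding q_def a_def using phi1 ix[OF x] by simp
      have qb: "q b = \<phi> h (F0 y)" unfolding q_def b_def using ix[OF y] by simp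
      show ?thesis unfolding RG_dist_def S N_def qa qb by simp
    qed
    show ?thesis
    proof (intro exI conjI ballI)
      show "F ` X \<subseteq> L1 n G" using L1 by auto
      fix x y assume x: "x \<in> X" and y: "y \<in> X"
      have "Q_dist n G (F x) (F y) = Min ((\<lambda>h. dist (F0 x) (\<phi> h (F0 y)) powr \<alpha>) ` carrier G)"
        unfolding Q_dist_def using dist_eq[OF x y] by (intro arg_cong[where f = Min] image_cong) auto
      also have "\<dots> = (quot_dist G \<phi> (F0 x) (F0 y)) powr \<alpha>"
        unfolding quot_dist_def using finG a by (intro Min_powr) auto
      also have "\<dots> = d x y powr \<alpha>" using F0 x y by simp
      finally show "d x y powr \<alpha> = Q_dist n G (F x) (F y)" by simp
    qed
  qed
qed

end
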